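(* Consider the network $\Sigma$ and nonempty closed sets $\mathcal{A}_i\subset\mathbb{R}^{n_i}$, $i\in\mathbb{N}$. Assume there are $\kappa_1,\kappa_2\in\mathcal{K}_\infty$ such that one of the following two conditions holds for all $i\in\mathbb{N}$, all $\xi_i\in\mathbb{R}^{n_i}$, $\bar\xi_i\in X(I_i)$ and $\mu_i\in\mathbb{R}^{p_i}$: (a) $|f_i(\xi_i,\bar\xi_i,\mu_i)|_{\mathcal{A}_i}\le\kappa_1(|\xi_i|_{\mathcal{A}_i})+\kappa_2(|\bar\xi_i|)+\kappa_2(|\mu_i|)$; (b) $|f_i(\xi_i,\bar\xi_i,\mu_i)|_{\mathcal{A}_i}\le\kappa_1(|\xi_i|_{\mathcal{A}_i})+\kappa_2(|\bar\xi_i|_{\mathcal{A}(I_i)})+\kappa_2(|\mu_i|)$. Assume further that $(\mathcal{A}_i)_{i\in\mathbb{N}}$ is uniformly bounded, i.e. there is $C>0$ with $|z|\le C$ for all $i\in\mathbb{N}$ and all $z\in\mathcal{A}_i$. Then $\Sigma$ is well-posed.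
   Context: For each $i\in\mathbb{N}$ fix positive integers $n_i,p_i$, norms $|\cdot|$ on $\mathbb{R}^{n_i}$, $\mathbb{R}^{p_i}$, and a finite set $I_i\subset\mathbb{N}\setminus\{i\}$ such that every set $\{j\in\mathbb{N}:i\in I_j\}$ is finite. $X(I_i):=\prod_{j\in I_i}\mathbb{R}^{n_j}$ with norm $|\bar x_i|:=\sup_{j\in I_i}|x_j|$. Each $f_i:\mathbb{R}^{n_i}\times X(I_i)\times\mathbb{R}^{p_i}\to\mathbb{R}^{n_i}$ is continuous. $X$ (resp. $U$) is the space of sequences $(x_i)_{i\in\mathbb{N}}$, $x_i\in\mathbb{R}^{n_i}$ (resp. $(u_i)$, $u_i\in\mathbb{R}^{p_i}$), with $\sup_i|x_i|<\infty$, normed by $|x|_\infty=\sup_i|x_i|$. $f:\prod_i\mathbb{R}^{n_i}\times U\to\prod_i\mathbb{R}^{n_i}$ is $f(x,u)_i=f_i(x_i,(x_j)_{j\in I_i},u_i)$; the network $\Sigma$ is $x^+=f(x,u)$, and it is well-posed if $f(x,u)\in X$ for all $x\in X$, $u\in U$. $|z|_{\mathcal{A}_i}:=\inf_{y\in\mathcal{A}_i}|z-y|$; $\mathcal{A}(I_i):=\prod_{j\in I_i}\mathcal{A}_j$ and $|\bar\xi_i|_{\mathcal{A}(I_i)}:=\inf_{z\in\mathcal{A}(I_i)}|\bar\xi_i-z|$ (which equals $\max_{j\in I_i}|\xi_j|_{\mathcal{A}_j}$). $\mathcal{K}_\infty$: continuous strictly increasing unbounded functions $[0,\infty)\to[0,\infty)$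 vanishing at $0$. *)

theory Defs
  imports "HOL-Analysis.Analysis"
begin

text \<open>Vectors of R^n are modelled as functions nat => real vanishing from index n on.
  Topology on nat => real is the product topology, which on these finite-dimensional
  subspaces coincides with the norm topology of any norm.\<close>

definition vspace :: "nat \<Rightarrow> (nat \<Rightarrow> real) set" where
  "vspace n = {v. \<forall>j\<ge>n. v j = 0}"

definition is_norm_on :: "nat \<Rightarrow> ((nat \<Rightarrow> real) \<Rightarrow> real) \<Rightarrow> bool" where
  "is_norm_on n N \<longleftrightarrow>
     (\<forall>v\<in>vspace n. N v \<ge> 0 \<and> (N v = 0 \<longleftrightarrow> v = (\<lambda>j. 0))) \<and>
     (\<forall>c. \<forall>v\<in>vspace n. N (\<lambda>j. c * v j) = \<bar>c\<bar> * N v) \<and>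
     (\<forall>v\<in>vspace n. \<forall>w\<in>vspace n. N (\<lambda>j. v j + w j) \<le> N v + N w)"

definition class_Kinf :: "(real \<Rightarrow> real) \<Rightarrow> bool" where
  "class_Kinf k \<longleftrightarrow> continuous_on {0..} k \<and> k 0 = 0 \<and> strict_mono_on {0..} k \<and>
     (\<forall>M. \<exists>r\<ge>0. k r > M)"

definition Xbar :: "(nat \<Rightarrow> nat) \<Rightarrow> nat set \<Rightarrow> (nat \<Rightarrow> nat \<Rightarrow> real) set" where
  "Xbar n I = {b. \<forall>j. (j \<in> I \<longrightarrow> b j \<in> vspace (n j)) \<and> (j \<notin> I \<longrightarrow> b j = (\<lambda>k. 0))}"

definition supnorm :: "(nat \<Rightarrow> (nat \<Rightarrow> real) \<Rightarrow> real) \<Rightarrow> nat set \<Rightarrow> (nat \<Rightarrow> nat \<Rightarrow> real) \<Rightarrow> real" where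
  "supnorm N I b = Max (insert 0 ((\<lambda>j. N j (b j)) ` I))"

definition distN :: "((nat \<Rightarrow> real) \<Rightarrow> real) \<Rightarrow> (nat \<Rightarrow> real) set \<Rightarrow> (nat \<Rightarrow> real) \<Rightarrow> real" where
  "distN N A z = Inf ((\<lambda>y. N (\<lambda>j. z j - y j)) ` A)"

definition prodA :: "(nat \<Rightarrow> (nat \<Rightarrow> real) set) \<Rightarrow> nat set \<Rightarrow> (nat \<Rightarrow> nat \<Rightarrow> real) set" where
  "prodA A I = {z. \<forall>j. (j \<in> I \<longrightarrow> z j \<in> A j) \<and> (j \<notin> I \<longrightarrow> z j = (\<lambda>k. 0))}"

definition distProd :: "(nat \<Rightarrow> (nat \<Rightarrow> real) \<Rightarrow> real) \<Rightarrow> (nat \<Rightarrow> (nat \<Rightarrow> real) set) \<Rightarrow> nat set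
    \<Rightarrow> (nat \<Rightarrow> nat \<Rightarrow> real) \<Rightarrow> real" where
  "distProd N A I b = Inf ((\<lambda>z. supnorm N I (\<lambda>j k. b j k - z j k)) ` prodA A I)"

definition seqspace :: "(nat \<Rightarrow> nat) \<Rightarrow> (nat \<Rightarrow> (nat \<Rightarrow> real) \<Rightarrow> real) \<Rightarrow> (nat \<Rightarrow> nat \<Rightarrow> real) set" where
  "seqspace n N = {x. (\<forall>i. x i \<in> vspace (n i)) \<and> (\<exists>M. \<forall>i. N i (x i) \<le> M)}"

definition netmap :: "(nat \<Rightarrow> (nat \<Rightarrow> real) \<Rightarrow> (nat \<Rightarrow> nat \<Rightarrow> real) \<Rightarrow> (nat \<Rightarrow> real) \<Rightarrow> (nat \<Rightarrow> real))
    \<Rightarrow> (nat \<Rightarrow> nat set) \<Rightarrow> (nat \<Rightarrow> nat \<Rightarrow> real) \<Rightarrow> (nat \<Rightarrow> nat \<Rightarrow> real) \<Rightarrow> (nat \<Rightarrow> nat \<Rightarrow> real)" where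
  "netmap f I x u = (\<lambda>i. f i (x i) (\<lambda>j. if j \<in> I i then x j else (\<lambda>k. 0)) (u i))"

definition well_posed where
  "well_posed n p Nx Nu I f \<longleftrightarrow>
     (\<forall>x\<in>seqspace n Nx. \<forall>u\<in>seqspace p Nu. netmap f I x u \<in> seqspace n Nx)"

end

theory Submission
  imports Defs
begin

lemma vs_diff: "v \<in> vspace n \<Longrightarrow> w \<in> vspace n \<Longrightarrow> (\<lambda>j. v j - w j) \<in> vspace n"
  by (simp add: vspace_def)

lemma nrm_nonneg: "is_norm_on n N \<Longrightarrow> v \<in> vspace n \<Longrightarrow> N v \<ge> 0"
  by (simp add: is_norm_on_def)

lemma nrm_tri: "is_norm_on n N \<Longrightarrow> v \<in> vspace n \<Longrightarrow> w \<in> vspace n \<Longrightarrow> N (\<lambda>j. v j + w j) \<le> N v + N w"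
  by (simp add: is_norm_on_def)

lemma nrm_neg: "is_norm_on n N \<Longrightarrow> v \<in> vspace n \<Longrightarrow> N (\<lambda>j. - v j) = N v"
proof -
  assume a: "is_norm_on n N" "v \<in> vspace n"
  then have "N (\<lambda>j. (-1) * v j) = \<bar>-1\<bar> * N v" unfolding is_norm_on_def by blast
  then show ?thesis by simp
qed

lemma distN_le: "is_norm_on n N \<Longrightarrow> A \<subseteq> vspace n \<Longrightarrow> y \<in> A \<Longrightarrow> z \<in> vspace n
   \<Longrightarrow> distN N A z \<le> N (\<lambda>j. z j - y j)"
  unfolding distN_def
  apply (rule cInf_lower)
   apply blast
  apply (rule bdd_belowI[where m=0])
  using nrm_nonneg vs_diff by blast

lemma distN_ge0: "is_norm_on n N \<Longrightarrow> A \<subseteq> vspace n \<Longrightarrow> A \<noteq> {} \<Longrightarrow> z \<in> vspace n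
   \<Longrightarrow> distN N A z \<ge> 0"
  unfolding distN_def
  apply (rule cInf_greatest)
   apply blast
  using nrm_nonneg vs_diff by blast

lemma distN_bd: "is_norm_on n N \<Longrightarrow> A \<subseteq> vspace n \<Longrightarrow> y \<in> A \<Longrightarrow> z \<in> vspace n
   \<Longrightarrow> \<forall>y\<in>A. N y \<le> C \<Longrightarrow> distN N A z \<le> N z + C"
proof -
  assume a: "is_norm_on n N" "A \<subseteq> vspace n" "y \<in> A" "z \<in> vspace n" "\<forall>y\<in>A. N y \<le> C"
  have "distN N A z \<le> N (\<lambda>j. z j - y j)" using distN_le a by blast
  also have "(\<lambda>j. z j - y j) = (\<lambda>j. z j + (- y j))" by simp
  also have "N \<dots> \<le> N z + N (\<lambda>j. - y j)"
    apply (rule nrm_tri[OF a(1) a(4)]) using a(2,3) by (auto simp: vspace_def)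
  also have "N (\<lambda>j. - y j) = N y" using nrm_neg a by blast
  finally show ?thesis using a by force
qed

lemma norm_le_dist: "is_norm_on n N \<Longrightarrow> A \<subseteq> vspace n \<Longrightarrow> A \<noteq> {} \<Longrightarrow> z \<in> vspace n
   \<Longrightarrow> \<forall>y\<in>A. N y \<le> C \<Longrightarrow> N z \<le> distN N A z + C"
proof -
  assume a: "is_norm_on n N" "A \<subseteq> vspace n" "A \<noteq> {}" "z \<in> vspace n" "\<forall>y\<in>A. N y \<le> C"
  have "N z - C \<le> distN N A z"
    unfolding distN_def
  proof (rule cInf_greatest)
    show "(\<lambda>y. N (\<lambda>j. z j - y j)) ` A \<noteq> {}" using a by blast
    fix t assume "t \<in> (\<lambda>y. N (\<lambda>j. z j - y j)) ` A"
    then obtain y where y: "y \<in> A" "t = N (\<lambda>j. z j - y j)" by blast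
    have "z = (\<lambda>j. (z j - y j) + y j)" by simp
    then have "N z = N (\<lambda>j. (z j - y j) + y j)" by simp
    also have "\<dots> \<le> N (\<lambda>j. z j - y j) + N y"
      apply (rule nrm_tri[OF a(1)]) using a y vs_diff by blast+
    finally show "N z - C \<le> t" using a y by force
  qed
  then show ?thesis by simp
qed

lemma supnorm_ge0: "finite I \<Longrightarrow> supnorm N I b \<ge> 0"
  unfolding supnorm_def by (rule Max_ge) auto

lemma supnorm_le: "finite I \<Longrightarrow> K \<ge> 0 \<Longrightarrow> \<forall>j\<in>I. N j (b j) \<le> K \<Longrightarrow> supnorm N I b \<le> K"
  unfolding supnorm_def by (subst Max_le_iff) auto

lemma kmono: "class_Kinf k \<Longrightarrow> 0 \<le> a \<Longrightarrow> a \<le> b \<Longrightarrow> k a \<le> k b"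
  unfolding class_Kinf_def
  by (metis atLeast_iff order.trans order_le_less strict_mono_onD)

theorem lemma4:
  fixes n p :: "nat \<Rightarrow> nat"
    and Nx Nu :: "nat \<Rightarrow> (nat \<Rightarrow> real) \<Rightarrow> real"
    and I :: "nat \<Rightarrow> nat set"
    and f :: "nat \<Rightarrow> (nat \<Rightarrow> real) \<Rightarrow> (nat \<Rightarrow> nat \<Rightarrow> real) \<Rightarrow> (nat \<Rightarrow> real) \<Rightarrow> (nat \<Rightarrow> real)"
    and A :: "nat \<Rightarrow> (nat \<Rightarrow> real) set"
  assumes n_pos: "\<forall>i. n i > 0" and p_pos: "\<forall>i. p i > 0"
    and Nx_norm: "\<forall>i. is_norm_on (n i) (Nx i)"
    and Nu_norm: "\<forall>i. is_norm_on (p i) (Nu i)"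
    and I_fin: "\<forall>i. finite (I i)" and I_irr: "\<forall>i. i \<notin> I i"
    and I_inv_fin: "\<forall>i. finite {j. i \<in> I j}"
    and f_range: "\<forall>i. \<forall>\<xi>\<in>vspace (n i). \<forall>b\<in>Xbar n (I i). \<forall>\<mu>\<in>vspace (p i).
                    f i \<xi> b \<mu> \<in> vspace (n i)"
    and f_cont: "\<forall>i. continuous_on (vspace (n i) \<times> Xbar n (I i) \<times> vspace (p i))
                    (\<lambda>(\<xi>, b, \<mu>). f i \<xi> b \<mu>)"
    and A_sub: "\<forall>i. A i \<subseteq> vspace (n i)"
    and A_ne: "\<forall>i. A i \<noteq> {}" and A_closed: "\<forall>i. closed (A i)"
    and kappa: "\<exists>\<kappa>1 \<kappa>2. class_Kinf \<kappa>1 \<and> class_Kinf \<kappa>2 \<and>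
       ((\<forall>i. \<forall>\<xi>\<in>vspace (n i). \<forall>b\<in>Xbar n (I i). \<forall>\<mu>\<in>vspace (p i).
           distN (Nx i) (A i) (f i \<xi> b \<mu>)
             \<le> \<kappa>1 (distN (Nx i) (A i) \<xi>) + \<kappa>2 (supnorm Nx (I i) b) + \<kappa>2 (Nu i \<mu>))
        \<or>
        (\<forall>i. \<forall>\<xi>\<in>vspace (n i). \<forall>b\<in>Xbar n (I i). \<forall>\<mu>\<in>vspace (p i).
           distN (Nx i) (A i) (f i \<xi> b \<mu>)
             \<le> \<kappa>1 (distN (Nx i) (A i) \<xi>) + \<kappa>2 (distProd Nx A (I i) b) + \<kappa>2 (Nu i \<mu>)))"
    and A_bdd: "\<exists>C>0. \<forall>i. \<forall>z\<in>A i. Nx i z \<le> C"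
  shows "well_posed n p Nx Nu I f"
proof -
  obtain k1 k2 where k1: "class_Kinf k1" and k2: "class_Kinf k2" and H:
    "(\<forall>i. \<forall>\<xi>\<in>vspace (n i). \<forall>b\<in>Xbar n (I i). \<forall>\<mu>\<in>vspace (p i).
           distN (Nx i) (A i) (f i \<xi> b \<mu>)
             \<le> k1 (distN (Nx i) (A i) \<xi>) + k2 (supnorm Nx (I i) b) + k2 (Nu i \<mu>))
        \<or>
        (\<forall>i. \<forall>\<xi>\<in>vspace (n i). \<forall>b\<in>Xbar n (I i). \<forall>\<mu>\<in>vspace (p i).
           distN (Nx i) (A i) (f i \<xi> b \<mu>)
             \<le> k1 (distN (Nx i) (A i) \<xi>) + k2 (distProd Nx A (I i) b) + k2 (Nu i \<mu>))"
    using kappa by blast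
  obtain C where C: "C > 0" "\<forall>i. \<forall>z\<in>A i. Nx i z \<le> C" using A_bdd by blast
  show ?thesis unfolding well_posed_def
  proof (intro ballI)
    fix x u assume x: "x \<in> seqspace n Nx" and u: "u \<in> seqspace p Nu"
    obtain M where M: "\<forall>i. Nx i (x i) \<le> M" using x unfolding seqspace_def by blast
    obtain Mu where Mu: "\<forall>i. Nu i (u i) \<le> Mu" using u unfolding seqspace_def by blast
    have xv: "\<And>i. x i \<in> vspace (n i)" using x unfolding seqspace_def by blast
    have uv: "\<And>i. u i \<in> vspace (p i)" using u unfolding seqspace_def by blast
    define M0 where "M0 = max M 0"
    define Mu0 where "Mu0 = max Mu 0"
    define b where "b i = (\<lambda>j. if j \<in> I i then x j else (\<lambda>k. 0::real))" for i
    have bX: "b i \<in> Xbar n (I i)" for i using xv unfolding b_def Xbar_def by auto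
    have nm: "netmap f I x u = (\<lambda>i. f i (x i) (b i) (u i))"
      unfolding netmap_def b_def by simp
    have fv: "f i (x i) (b i) (u i) \<in> vspace (n i)" for i using f_range[rule_format, OF xv bX uv] .
    have ex: "\<exists>y. y \<in> A j" for j using A_ne by blast
    have bound: "Nx i (f i (x i) (b i) (u i)) \<le> k1 (M0 + C) + k2 (M0 + C) + k2 Mu0 + C" for i
    proof -
      obtain y where y: "y \<in> A i" using ex by blast
      have d0: "distN (Nx i) (A i) (x i) \<ge> 0" using distN_ge0[OF Nx_norm[rule_format] A_sub[rule_format] A_ne[rule_format] xv] .
      have d1: "distN (Nx i) (A i) (x i) \<le> M0 + C"
      proof -
        have "distN (Nx i) (A i) (x i) \<le> Nx i (x i) + C"
          using distN_bd[OF Nx_norm[rule_format] A_sub[rule_format] y xv, of C] C(2) by blast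
        then show ?thesis using M[rule_format, of i] unfolding M0_def by linarith
      qed
      have t1: "k1 (distN (Nx i) (A i) (x i)) \<le> k1 (M0 + C)" using kmono[OF k1 d0 d1] .
      have nu0: "Nu i (u i) \<ge> 0" using nrm_nonneg[OF Nu_norm[rule_format] uv] .
      have t3: "k2 (Nu i (u i)) \<le> k2 Mu0"
        using kmono[OF k2 nu0] Mu unfolding Mu0_def by (meson max.cobounded1 order_trans)
      have s0: "supnorm Nx (I i) (b i) \<ge> 0" using supnorm_ge0[OF I_fin[rule_format]] by blast
      have s1: "supnorm Nx (I i) (b i) \<le> M0 + C"
      proof (rule supnorm_le)
        show "finite (I i)" using I_fin by blast
        show "0 \<le> M0 + C" using C unfolding M0_def by simp
        show "\<forall>j\<in>I i. Nx j (b i j) \<le> M0 + C"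
        proof
          fix j assume "j \<in> I i"
          then have "b i j = x j" unfolding b_def by simp
          moreover have "Nx j (x j) \<le> M" using M by blast
          ultimately show "Nx j (b i j) \<le> M0 + C" using C unfolding M0_def by simp
        qed
      qed
      define z where "z j = (if j \<in> I i then (SOME y. y \<in> A j) else (\<lambda>k. 0::real))" for j
      have zA: "z \<in> prodA A (I i)" unfolding prodA_def
      proof (intro CollectI allI conjI impI)
        fix j assume "j \<in> I i" then show "z j \<in> A j" unfolding z_def using someI_ex[OF ex] by simp
      next
        fix j assume "j \<notin> I i" then show "z j = (\<lambda>k. 0)" unfolding z_def by simp
      qed
      have p0: "distProd Nx A (I i) (b i) \<ge> 0"
        unfolding distProd_def apply (rule cInf_greatest) using zA apply blast using supnorm_ge0[OF I_fin[rule_format]] by blast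
      have p1: "distProd Nx A (I i) (b i) \<le> M0 + C"
      proof -
        have "distProd Nx A (I i) (b i) \<le> supnorm Nx (I i) (\<lambda>j k. b i j k - z j k)"
          unfolding distProd_def apply (rule cInf_lower) using zA apply blast
          apply (rule bdd_belowI[where m=0]) using supnorm_ge0[OF I_fin[rule_format]] by blast
        also have "\<dots> \<le> M0 + C"
        proof (rule supnorm_le)
          show "finite (I i)" using I_fin by blast
          show "0 \<le> M0 + C" using C unfolding M0_def by simp
          show "\<forall>j\<in>I i. Nx j (\<lambda>k. b i j k - z j k) \<le> M0 + C"
          proof
            fix j assume j: "j \<in> I i"
            have zj: "z j \<in> A j" using zA j unfolding prodA_def by blast
            have zjv: "z j \<in> vspace (n j)" using zj A_sub by blast
            have mzv: "(\<lambda>k. - z j k) \<in> vspace (n j)" using zjv by (simp add: vspace_def)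
            have zC: "Nx j (z j) \<le> C" using C(2) zj by blast
            have xM: "Nx j (x j) \<le> M" using M by blast
            have "Nx j (\<lambda>k. b i j k - z j k) = Nx j (\<lambda>k. x j k + (- z j k))"
              using j unfolding b_def by simp
            also have "\<dots> \<le> Nx j (x j) + Nx j (\<lambda>k. - z j k)"
              by (rule nrm_tri[OF Nx_norm[rule_format] xv mzv])
            also have "Nx j (\<lambda>k. - z j k) = Nx j (z j)" using nrm_neg[OF Nx_norm[rule_format] zjv] .
            finally show "Nx j (\<lambda>k. b i j k - z j k) \<le> M0 + C"
              using xM zC unfolding M0_def by linarith
          qed
        qed
        finally show ?thesis .
      qed
      have dd: "distN (Nx i) (A i) (f i (x i) (b i) (u i)) \<le> k1 (M0 + C) + k2 (M0 + C) + k2 Mu0"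
        using H
      proof (elim disjE)
        assume h: "\<forall>i. \<forall>\<xi>\<in>vspace (n i). \<forall>b\<in>Xbar n (I i). \<forall>\<mu>\<in>vspace (p i).
           distN (Nx i) (A i) (f i \<xi> b \<mu>)
             \<le> k1 (distN (Nx i) (A i) \<xi>) + k2 (supnorm Nx (I i) b) + k2 (Nu i \<mu>)"
        have "distN (Nx i) (A i) (f i (x i) (b i) (u i)) \<le> k1 (distN (Nx i) (A i) (x i)) + k2 (supnorm Nx (I i) (b i)) + k2 (Nu i (u i))"
          using h[rule_format, OF xv bX uv] .
        then show ?thesis using t1 t3 kmono[OF k2 s0 s1] by linarith
      next
        assume h: "\<forall>i. \<forall>\<xi>\<in>vspace (n i). \<forall>b\<in>Xbar n (I i). \<forall>\<mu>\<in>vspace (p i).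
           distN (Nx i) (A i) (f i \<xi> b \<mu>)
             \<le> k1 (distN (Nx i) (A i) \<xi>) + k2 (distProd Nx A (I i) b) + k2 (Nu i \<mu>)"
        have "distN (Nx i) (A i) (f i (x i) (b i) (u i)) \<le> k1 (distN (Nx i) (A i) (x i)) + k2 (distProd Nx A (I i) (b i)) + k2 (Nu i (u i))"
          using h[rule_format, OF xv bX uv] .
        then show ?thesis using t1 t3 kmono[OF k2 p0 p1] by linarith
      qed
      have "Nx i (f i (x i) (b i) (u i)) \<le> distN (Nx i) (A i) (f i (x i) (b i) (u i)) + C"
        using norm_le_dist[OF Nx_norm[rule_format] A_sub[rule_format] A_ne[rule_format] fv] C(2) by blast
      then show ?thesis using dd by linarith
    qed
    show "netmap f I x u \<in> seqspace n Nx"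
      unfolding nm seqspace_def using fv bound by blast
  qed
qed

end
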